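(* Let $K$ be a skew field with center $P$ and an involution, $\mathcal C$ a linear category over $P$ with involution, $A$ and $B$ selfadjoint representations of $\mathcal C$ over $K$, and $f=f^\circ\in\operatorname{Aut}(A)$, $g=g^\circ\in\operatorname{Aut}(B)$. Then $A^f$ is congruent to $B^g$ if and only if $g=h^\circ fh$ for some isomorphism $h:B\to A$.
   Context: $K$ has an involution $a\mapsto\bar a$. A linear category over $P$ has $P$-vector-space Hom sets and bilinear composition; an involution on it: $u\mapsto u^*$, $(\alpha:u\to v)\mapsto(\alpha^*:v^*\to u^* )$, $u^{**}=u\ne u^*$, $\alpha^{**}=\alpha$, $(\alpha\beta)^*=\beta^*\alpha^*$, $(\alpha a)^*=\alpha^*\bar a$. Representations: functors to finite-dimensional right $K$-spaces, finite total dimension, preserving $P$-linear combinations; morphisms: natural transformations. $V^*$: semilinear forms ($\varphi(xa)=\bar a\varphi(x)$), $A^*\varphi=\varphi A$, $V^{**}=V$. $A^\circ_u=(A_{u^*})^*$, $A^\circ_\alpha=(A_{\alpha^*})^*$, $f^\circ_u=(f_{u^*})^*$. Selfadjoint: $A=A^\circ$; congruence: isomorphism $\varphi$ of selfadjoint representations with $\varphi^\circ=\varphi^{-1}$. Fix a partition of the objects into $S_0$ and $S_0^*$. For selfadjoint $A$ and automorphism $f=f^\circ$ of $A$: $\tilde f_v=f_v$, $\tilde f_{v^*}=1$ for $v\in S_0$, and $A^f$ is the selfadjoint representation with $A^f_v=A_v$ for all objects $v$ and $A^f_\alpha=\tilde f_v^{-1}A_\alpha\tilde f_u$ for $\alpha:u\to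 v$. *)

theory Defs
  imports "Jordan_Normal_Form.Matrix"
begin

text \<open>The skew field K is a type of class division_ring. An involution is an
additive anti-multiplicative map of order 2 (bar 1 = 1 follows).\<close>

definition skew_involution :: "('k::division_ring \<Rightarrow> 'k) \<Rightarrow> bool" where
  "skew_involution bar \<longleftrightarrow>
     (\<forall>a b. bar (a + b) = bar a + bar b \<and> bar (a * b) = bar b * bar a \<and> bar (bar a) = a)"

definition center :: "'k::ring set" where
  "center = {a. \<forall>b. a * b = b * a}"

text \<open>All morphisms live in one type 'm; each morphism has a domain and codomain,
so Hom(u,v) = {a. dom a = u and cod a = v}. lc_comp C b a is the composite b a
(first a, then b).\<close>

record ('o, 'm, 'k) lincat =
  lc_dom   :: "'m \<Rightarrow> 'o"
  lc_cod   :: "'m \<Rightarrow> 'o"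
  lc_comp  :: "'m \<Rightarrow> 'm \<Rightarrow> 'm"
  lc_id    :: "'o \<Rightarrow> 'm"
  lc_add   :: "'m \<Rightarrow> 'm \<Rightarrow> 'm"
  lc_scal  :: "'m \<Rightarrow> 'k \<Rightarrow> 'm"
  lc_zero  :: "'o \<Rightarrow> 'o \<Rightarrow> 'm"
  lc_ostar :: "'o \<Rightarrow> 'o"
  lc_mstar :: "'m \<Rightarrow> 'm"

definition hom :: "('o, 'm, 'k) lincat \<Rightarrow> 'o \<Rightarrow> 'o \<Rightarrow> 'm set" where
  "hom C u v = {a. lc_dom C a = u \<and> lc_cod C a = v}"

definition lin_cat_inv :: "('o, 'm, 'k::division_ring) lincat \<Rightarrow> ('k \<Rightarrow> 'k) \<Rightarrow> bool" where
  "lin_cat_inv C bar \<longleftrightarrow>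
    \<comment> \<open>category\<close>
    (\<forall>u. lc_id C u \<in> hom C u u) \<and>
    (\<forall>a b. lc_dom C b = lc_cod C a \<longrightarrow> lc_comp C b a \<in> hom C (lc_dom C a) (lc_cod C b)) \<and>
    (\<forall>a b c. lc_dom C b = lc_cod C a \<longrightarrow> lc_dom C c = lc_cod C b \<longrightarrow>
        lc_comp C c (lc_comp C b a) = lc_comp C (lc_comp C c b) a) \<and>
    (\<forall>a. lc_comp C (lc_id C (lc_cod C a)) a = a \<and> lc_comp C a (lc_id C (lc_dom C a)) = a) \<and>
    \<comment> \<open>each Hom(u,v) is a vector space over P (right scalar action)\<close>
    (\<forall>u v. lc_zero C u v \<in> hom C u v) \<and>
    (\<forall>u v. \<forall>a\<in>hom C u v. \<forall>b\<in>hom C u v. lc_add C a b \<in> hom C u v) \<and>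
    (\<forall>u v. \<forall>a\<in>hom C u v. \<forall>p\<in>center. lc_scal C a p \<in> hom C u v) \<and>
    (\<forall>u v. \<forall>a\<in>hom C u v. \<forall>b\<in>hom C u v. \<forall>c\<in>hom C u v.
        lc_add C (lc_add C a b) c = lc_add C a (lc_add C b c) \<and> lc_add C a b = lc_add C b a) \<and>
    (\<forall>u v. \<forall>a\<in>hom C u v. lc_add C a (lc_zero C u v) = a \<and>
        (\<exists>b\<in>hom C u v. lc_add C a b = lc_zero C u v)) \<and>
    (\<forall>u v. \<forall>a\<in>hom C u v. \<forall>b\<in>hom C u v. \<forall>p\<in>center. \<forall>q\<in>center.
        lc_scal C a (p * q) = lc_scal C (lc_scal C a p) q \<and>
        lc_scal C a 1 = a \<and>
        lc_scal C (lc_add C a b) p = lc_add C (lc_scal C a p) (lc_scal C b p) \<and>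
        lc_scal C a (p + q) = lc_add C (lc_scal C a p) (lc_scal C a q)) \<and>
    \<comment> \<open>composition is bilinear\<close>
    (\<forall>u v w. \<forall>a\<in>hom C u v. \<forall>a'\<in>hom C u v. \<forall>b\<in>hom C v w. \<forall>b'\<in>hom C v w. \<forall>p\<in>center.
        lc_comp C (lc_add C b b') a = lc_add C (lc_comp C b a) (lc_comp C b' a) \<and>
        lc_comp C b (lc_add C a a') = lc_add C (lc_comp C b a) (lc_comp C b a') \<and>
        lc_comp C (lc_scal C b p) a = lc_scal C (lc_comp C b a) p \<and>
        lc_comp C b (lc_scal C a p) = lc_scal C (lc_comp C b a) p) \<and>
    \<comment> \<open>involution\<close>
    (\<forall>u. lc_ostar C (lc_ostar C u) = u \<and> lc_ostar C u \<noteq> u) \<and>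
    (\<forall>a. lc_mstar C a \<in> hom C (lc_ostar C (lc_cod C a)) (lc_ostar C (lc_dom C a)) \<and>
         lc_mstar C (lc_mstar C a) = a) \<and>
    (\<forall>a b. lc_dom C a = lc_cod C b \<longrightarrow>
         lc_mstar C (lc_comp C a b) = lc_comp C (lc_mstar C b) (lc_mstar C a)) \<and>
    (\<forall>a. \<forall>p\<in>center. lc_mstar C (lc_scal C a p) = lc_scal C (lc_mstar C a) (bar p))"

text \<open>A finite-dimensional right K-space is represented as K^n (column vectors),
a linear map K^m \<rightarrow> K^n as an n\<times>m matrix. A representation is a pair (d, R):
d u = dimension of the space at u, R a = matrix of the map at a.\<close>

type_synonym ('o, 'm, 'k) rep = "('o \<Rightarrow> nat) \<times> ('m \<Rightarrow> 'k mat)"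

definition mat_rscal :: "'k::ring mat \<Rightarrow> 'k \<Rightarrow> 'k mat" where
  "mat_rscal M a = map_mat (\<lambda>x. x * a) M"

definition is_rep :: "('o, 'm, 'k::division_ring) lincat \<Rightarrow> ('o, 'm, 'k) rep \<Rightarrow> bool" where
  "is_rep C A \<longleftrightarrow>
    finite {u. fst A u \<noteq> 0} \<and>
    (\<forall>a. snd A a \<in> carrier_mat (fst A (lc_cod C a)) (fst A (lc_dom C a))) \<and>
    (\<forall>u. snd A (lc_id C u) = 1\<^sub>m (fst A u)) \<and>
    (\<forall>a b. lc_dom C b = lc_cod C a \<longrightarrow> snd A (lc_comp C b a) = snd A b * snd A a) \<and>
    (\<forall>u v. \<forall>a\<in>hom C u v. \<forall>b\<in>hom C u v. \<forall>p\<in>center. \<forall>q\<in>center.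
       snd A (lc_add C (lc_scal C a p) (lc_scal C b q)) =
         mat_rscal (snd A a) p + mat_rscal (snd A b) q)"

definition rep_hom :: "('o, 'm, 'k::division_ring) lincat \<Rightarrow> ('o, 'm, 'k) rep \<Rightarrow> ('o, 'm, 'k) rep
    \<Rightarrow> ('o \<Rightarrow> 'k mat) \<Rightarrow> bool" where
  "rep_hom C A B F \<longleftrightarrow>
    (\<forall>u. F u \<in> carrier_mat (fst B u) (fst A u)) \<and>
    (\<forall>a. F (lc_cod C a) * snd A a = snd B a * F (lc_dom C a))"

definition rep_iso :: "('o, 'm, 'k::division_ring) lincat \<Rightarrow> ('o, 'm, 'k) rep \<Rightarrow> ('o, 'm, 'k) rep
    \<Rightarrow> ('o \<Rightarrow> 'k mat) \<Rightarrow> bool" where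
  "rep_iso C A B F \<longleftrightarrow> rep_hom C A B F \<and>
    (\<forall>u. \<exists>G \<in> carrier_mat (fst A u) (fst B u). G * F u = 1\<^sub>m (fst A u) \<and> F u * G = 1\<^sub>m (fst B u))"

definition minv :: "'k::ring_1 mat \<Rightarrow> 'k mat" where
  "minv M = (THE G. G * M = 1\<^sub>m (dim_col M) \<and> M * G = 1\<^sub>m (dim_row M))"

text \<open>Identifying the space of semilinear forms on K^n with K^n via
y \<mapsto> (x \<mapsto> \<Sum>i. bar(x_i) y_i), the dual map A^* of a matrix A is its
conjugate transpose with respect to bar, and V^{**} = V canonically.\<close>

definition adjm :: "('k \<Rightarrow> 'k) \<Rightarrow> 'k mat \<Rightarrow> 'k mat" where
  "adjm bar M = mat (dim_col M) (dim_row M) (\<lambda>(i, j). bar (M $$ (j, i)))"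

definition dual_rep :: "('o, 'm, 'k) lincat \<Rightarrow> ('k \<Rightarrow> 'k) \<Rightarrow> ('o, 'm, 'k) rep \<Rightarrow> ('o, 'm, 'k) rep" where
  "dual_rep C bar A = ((\<lambda>u. fst A (lc_ostar C u)), (\<lambda>a. adjm bar (snd A (lc_mstar C a))))"

definition dual_map :: "('o, 'm, 'k) lincat \<Rightarrow> ('k \<Rightarrow> 'k) \<Rightarrow> ('o \<Rightarrow> 'k mat) \<Rightarrow> ('o \<Rightarrow> 'k mat)" where
  "dual_map C bar F = (\<lambda>u. adjm bar (F (lc_ostar C u)))"

definition selfadjoint :: "('o, 'm, 'k::division_ring) lincat \<Rightarrow> ('k \<Rightarrow> 'k) \<Rightarrow> ('o, 'm, 'k) rep \<Rightarrow> bool" where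
  "selfadjoint C bar A \<longleftrightarrow> is_rep C A \<and> A = dual_rep C bar A"

definition congruent :: "('o, 'm, 'k::division_ring) lincat \<Rightarrow> ('k \<Rightarrow> 'k) \<Rightarrow> ('o, 'm, 'k) rep
    \<Rightarrow> ('o, 'm, 'k) rep \<Rightarrow> bool" where
  "congruent C bar A B \<longleftrightarrow> selfadjoint C bar A \<and> selfadjoint C bar B \<and>
     (\<exists>\<phi>. rep_iso C A B \<phi> \<and> (\<forall>u. dual_map C bar \<phi> u = minv (\<phi> u)))"

definition obj_partition :: "('o, 'm, 'k) lincat \<Rightarrow> 'o set \<Rightarrow> bool" where
  "obj_partition C S0 \<longleftrightarrow> S0 \<inter> lc_ostar C ` S0 = {} \<and> S0 \<union> lc_ostar C ` S0 = UNIV"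

definition ftilde :: "'o set \<Rightarrow> ('o, 'm, 'k::ring_1) rep \<Rightarrow> ('o \<Rightarrow> 'k mat) \<Rightarrow> 'o \<Rightarrow> 'k mat" where
  "ftilde S0 A f v = (if v \<in> S0 then f v else 1\<^sub>m (fst A v))"

definition twist :: "('o, 'm, 'k::ring_1) lincat \<Rightarrow> 'o set \<Rightarrow> ('o, 'm, 'k) rep \<Rightarrow> ('o \<Rightarrow> 'k mat)
    \<Rightarrow> ('o, 'm, 'k) rep" where
  "twist C S0 A f = (fst A,
     (\<lambda>a. minv (ftilde S0 A f (lc_cod C a)) * snd A a * ftilde S0 A f (lc_dom C a)))"

end

theory Submission imports Defs begin

definition isom :: "nat \<Rightarrow> nat \<Rightarrow> 'k::ring_1 mat \<Rightarrow> bool" where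
  "isom n m M \<longleftrightarrow> M \<in> carrier_mat n m \<and> (\<exists>G\<in>carrier_mat m n. G * M = 1\<^sub>m m \<and> M * G = 1\<^sub>m n)"

lemma cd: "A \<in> carrier_mat n m \<Longrightarrow> dim_row A = n \<and> dim_col A = m" by auto

lemma mas: "dim_col A = dim_row B \<Longrightarrow> dim_col B = dim_row C \<Longrightarrow> (A * B) * C = A * (B * (C :: 'a::semiring_0 mat))"
  by (rule assoc_mult_mat[of A _ "dim_row B" _ "dim_row C"]) auto

lemma mcan: "A * B = 1\<^sub>m (dim_row C) \<Longrightarrow> dim_col A = dim_row B \<Longrightarrow> A * (B * (C :: 'a::semiring_1 mat)) = C"
proof -
  assume h: "A * B = 1\<^sub>m (dim_row C)" "dim_col A = dim_row B"
  have "dim_col B = dim_row C" using h(1) by (metis index_mult_mat(3) index_one_mat(3))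
  hence "A * (B * C) = (A * B) * C" using mas[OF h(2)] by metis
  also have "\<dots> = C" using h(1) by (metis left_mult_one_mat')
  finally show ?thesis .
qed

lemmas ms = mas mcan

lemma minv_unique:
  fixes M :: "'k::ring_1 mat"
  assumes M: "M \<in> carrier_mat n m" and G: "G \<in> carrier_mat m n" and "G * M = 1\<^sub>m m" "M * G = 1\<^sub>m n"
  shows "minv M = G"
  unfolding minv_def
proof (rule the_equality)
  show "G * M = 1\<^sub>m (dim_col M) \<and> M * G = 1\<^sub>m (dim_row M)" using assms by auto
next
  fix G' assume h: "G' * M = 1\<^sub>m (dim_col M) \<and> M * G' = 1\<^sub>m (dim_row M)"
  have G'c: "G' \<in> carrier_mat m n"
  proof -
    have "dim_row G' = m" using h M by (metis carrier_matD(2) index_mult_mat(2) index_one_mat(2))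
    moreover have "dim_col G' = n" using h M by (metis carrier_matD(1) index_mult_mat(3) index_one_mat(3))
    ultimately show ?thesis by auto
  qed
  have "G' = G' * (M * G)" using assms G'c by simp
  also have "\<dots> = (G' * M) * G" using assms G'c by (simp add: mas)
  also have "\<dots> = G" using h assms by simp
  finally show "G' = G" .
qed

lemma isom_minv:
  fixes M :: "'k::ring_1 mat"
  assumes "isom n m M"
  shows "minv M \<in> carrier_mat m n" "minv M * M = 1\<^sub>m m" "M * minv M = 1\<^sub>m n" "isom m n (minv M)"
    "minv (minv M) = M" "M \<in> carrier_mat n m"
proof -
  obtain G where G: "G \<in> carrier_mat m n" "G * M = 1\<^sub>m m" "M * G = 1\<^sub>m n" and M: "M \<in> carrier_mat n m"
    using assms unfolding isom_def by blast
  have e: "minv M = G" by (rule minv_unique[OF M G])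
  show "minv M \<in> carrier_mat m n" "minv M * M = 1\<^sub>m m" "M * minv M = 1\<^sub>m n" using e G by auto
  show "isom m n (minv M)" unfolding isom_def using e G M by auto
  show "minv (minv M) = M" using e G M by (simp add: minv_unique)
  show "M \<in> carrier_mat n m" by (fact M)
qed

lemma isom_one: "isom n n (1\<^sub>m n :: 'k::ring_1 mat)" "minv (1\<^sub>m n :: 'k::ring_1 mat) = 1\<^sub>m n"
  unfolding isom_def by (auto intro!: minv_unique)

lemma isom_mult:
  fixes M N :: "'k::ring_1 mat"
  assumes M: "isom n m M" and N: "isom m k N"
  shows "isom n k (M * N)" "minv (M * N) = minv N * minv M"
proof -
  note a = isom_minv[OF M] isom_minv[OF N]
  have 1: "(minv N * minv M) * (M * N) = 1\<^sub>m k"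
    using a cd[OF a(1)] cd[OF a(6)] cd[OF a(7)] cd[OF a(12)] by (simp add: ms)
  have 2: "(M * N) * (minv N * minv M) = 1\<^sub>m n"
    using a cd[OF a(1)] cd[OF a(6)] cd[OF a(7)] cd[OF a(12)] by (simp add: ms)
  show "isom n k (M * N)" unfolding isom_def using 1 2 a by (intro conjI bexI[of _ "minv N * minv M"]) auto
  show "minv (M * N) = minv N * minv M" using 1 2 a by (intro minv_unique) auto
qed

lemma swap_inv:
  fixes F G X Y :: "'k::ring_1 mat"
  assumes F: "isom n' n F" and G: "isom m' m G" and X: "X \<in> carrier_mat n m" and Y: "Y \<in> carrier_mat n' m'"
    and e: "F * X = Y * G"
  shows "minv F * Y = X * minv G"
proof -
  note a = isom_minv[OF F] isom_minv[OF G]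
  note d = cd[OF a(1)] cd[OF a(6)] cd[OF a(7)] cd[OF a(12)] cd[OF X] cd[OF Y]
  have "minv F * Y = minv F * (Y * (G * minv G))" using a d by simp
  also have "\<dots> = minv F * ((Y * G) * minv G)" using a d by (simp add: mas)
  also have "\<dots> = minv F * (F * (X * minv G))" unfolding e[symmetric] using a d by (simp add: mas)
  also have "\<dots> = X * minv G" using a d by (simp add: mcan)
  finally show ?thesis .
qed

lemma bar_basic:
  assumes "skew_involution bar"
  shows "bar 0 = 0" "bar 1 = 1" "bar (bar a) = a" "bar (a * b) = bar b * bar a" "bar (a + b) = bar a + bar b"
proof -
  have h: "\<And>a b. bar (a + b) = bar a + bar b \<and> bar (a * b) = bar b * bar a \<and> bar (bar a) = a"
    using assms unfolding skew_involution_def by blast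
  show "bar (bar a) = a" "bar (a * b) = bar b * bar a" "bar (a + b) = bar a + bar b" using h by auto
  have "bar 0 = bar 0 + bar 0" using h[of 0 0] by simp
  thus "bar 0 = 0" by simp
  have "bar (bar 1 * 1) = bar 1 * bar (bar 1)" using h by blast
  thus "bar 1 = 1" using h by simp
qed

lemma bar_sum:
  assumes "skew_involution bar"
  shows "bar (sum f A) = sum (\<lambda>x. bar (f x)) A"
proof (induction A rule: infinite_finite_induct)
  case (infinite A) thus ?case using bar_basic[OF assms] by simp
next
  case empty thus ?case using bar_basic[OF assms] by simp
next
  case (insert x F) thus ?case using bar_basic[OF assms] by simp
qed

lemma adjm_dims[simp]: "dim_row (adjm bar M) = dim_col M" "dim_col (adjm bar M) = dim_row M"
  "i < dim_col M \<Longrightarrow> j < dim_row M \<Longrightarrow> adjm bar M $$ (i, j) = bar (M $$ (j, i))"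
  unfolding adjm_def by auto

lemma adjm_carrier: "M \<in> carrier_mat n m \<Longrightarrow> adjm bar M \<in> carrier_mat m n"
  by auto

lemma adjm_adjm: "skew_involution bar \<Longrightarrow> adjm bar (adjm bar M) = M"
  by (rule eq_matI) (auto simp: bar_basic)

lemma adjm_one: "skew_involution bar \<Longrightarrow> adjm bar (1\<^sub>m n) = 1\<^sub>m n"
  by (rule eq_matI) (auto simp: bar_basic)

lemma adjm_mult:
  fixes M N :: "'k::division_ring mat"
  assumes sb: "skew_involution bar" and d: "dim_col M = dim_row N"
  shows "adjm bar (M * N) = adjm bar N * adjm bar M"
proof (rule eq_matI)
  fix i j assume i: "i < dim_row (adjm bar N * adjm bar M)" and j: "j < dim_col (adjm bar N * adjm bar M)"
  have "adjm bar (M * N) $$ (i, j) = bar (row M j \<bullet> col N i)" using i j by simp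
  also have "\<dots> = (\<Sum>k\<in>{0..<dim_row N}. bar (N $$ (k, i)) * bar (M $$ (j, k)))"
    unfolding scalar_prod_def using i j d by (simp add: bar_sum[OF sb] bar_basic[OF sb])
  also have "\<dots> = row (adjm bar N) i \<bullet> col (adjm bar M) j"
    unfolding scalar_prod_def using i j d by simp
  also have "\<dots> = (adjm bar N * adjm bar M) $$ (i, j)" using i j by simp
  finally show "adjm bar (M * N) $$ (i, j) = (adjm bar N * adjm bar M) $$ (i, j)" .
qed auto

lemma adjm_isom:
  fixes M :: "'k::division_ring mat"
  assumes sb: "skew_involution bar" and M: "isom n m M"
  shows "isom m n (adjm bar M)" "minv (adjm bar M) = adjm bar (minv M)"
proof -
  note a = isom_minv[OF M]
  have 1: "adjm bar (minv M) * adjm bar M = 1\<^sub>m n"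
    using a adjm_mult[OF sb, of M "minv M"] adjm_one[OF sb] by auto
  have 2: "adjm bar M * adjm bar (minv M) = 1\<^sub>m m"
    using a adjm_mult[OF sb, of "minv M" M] adjm_one[OF sb] by auto
  show "isom m n (adjm bar M)" unfolding isom_def using 1 2 a
    by (intro conjI bexI[of _ "adjm bar (minv M)"]) auto
  show "minv (adjm bar M) = adjm bar (minv M)" using 1 2 a by (intro minv_unique) auto
qed

lemma rscal_dims[simp]: "dim_row (mat_rscal M p) = dim_row M" "dim_col (mat_rscal M p) = dim_col M"
  unfolding mat_rscal_def by auto

lemma mult_rscal: "dim_col M = dim_row N \<Longrightarrow> M * mat_rscal N p = mat_rscal (M * N) (p::'k::division_ring)"
  by (rule eq_matI) (auto simp: mat_rscal_def scalar_prod_def sum_distrib_right mult.assoc)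

lemma rscal_mult: "p \<in> center \<Longrightarrow> dim_col M = dim_row N \<Longrightarrow> mat_rscal M p * N = mat_rscal (M * N) (p::'k::division_ring)"
  by (rule eq_matI) (auto simp: mat_rscal_def scalar_prod_def sum_distrib_right mult.assoc center_def)

lemma key1:
  fixes Fv Gv Fu Gu R :: "'k::ring_1 mat"
  assumes Fv: "isom n n Fv" and Gv: "isom n n Gv" and Fu: "isom m m Fu" and Gu: "isom m m Gu"
    and R: "R \<in> carrier_mat n m" and e: "(Fv * Gv) * R = R * (Fu * Gu)"
  shows "(minv Fv * R * Fu) * Gu = Gv * R"
proof -
  note a = isom_minv[OF Fv] isom_minv[OF Gv] isom_minv[OF Fu] isom_minv[OF Gu]
  note d = cd[OF a(1)] cd[OF a(6)] cd[OF a(7)] cd[OF a(12)] cd[OF a(13)] cd[OF a(18)]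
     cd[OF a(19)] cd[OF a(24)] cd[OF R]
  have "(minv Fv * R * Fu) * Gu = minv Fv * (R * (Fu * Gu))" using d by (simp add: mas)
  also have "\<dots> = minv Fv * (Fv * (Gv * R))" unfolding e[symmetric] using d by (simp add: mas)
  also have "\<dots> = Gv * R" using a d by (simp add: mcan)
  finally show ?thesis .
qed

lemma cat_facts:
  assumes "lin_cat_inv C bar"
  shows "lc_dom C (lc_mstar C a) = lc_ostar C (lc_cod C a)" "lc_cod C (lc_mstar C a) = lc_ostar C (lc_dom C a)"
    "lc_ostar C (lc_ostar C u) = u" "lc_mstar C (lc_mstar C a) = a"
    "lc_dom C (lc_id C u) = u" "lc_cod C (lc_id C u) = u"
    "lc_dom C b = lc_cod C a \<Longrightarrow> lc_dom C (lc_comp C b a) = lc_dom C a"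
    "lc_dom C b = lc_cod C a \<Longrightarrow> lc_cod C (lc_comp C b a) = lc_cod C b"
    "x \<in> hom C u v \<Longrightarrow> y \<in> hom C u v \<Longrightarrow> p \<in> center \<Longrightarrow> q \<in> center \<Longrightarrow>
       lc_add C (lc_scal C x p) (lc_scal C y q) \<in> hom C u v"
proof -
  note L = assms[unfolded lin_cat_inv_def]
  have c1: "\<forall>u. lc_id C u \<in> hom C u u" using L by (elim conjE) assumption
  have c2: "\<forall>a b. lc_dom C b = lc_cod C a \<longrightarrow> lc_comp C b a \<in> hom C (lc_dom C a) (lc_cod C b)" using L by (elim conjE) assumption
  have s2: "\<forall>u v. \<forall>a\<in>hom C u v. \<forall>b\<in>hom C u v. lc_add C a b \<in> hom C u v" using L by (elim conjE) assumption
  have s1: "\<forall>u v. \<forall>a\<in>hom C u v. \<forall>p\<in>center. lc_scal C a p \<in> hom C u v" using L by (elim conjE) assumption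
  have c12: "\<forall>u. lc_ostar C (lc_ostar C u) = u \<and> lc_ostar C u \<noteq> u" using L by (elim conjE) assumption
  have c13: "\<forall>a. lc_mstar C a \<in> hom C (lc_ostar C (lc_cod C a)) (lc_ostar C (lc_dom C a)) \<and>
         lc_mstar C (lc_mstar C a) = a" using L by (elim conjE) assumption
  have m: "lc_mstar C a \<in> hom C (lc_ostar C (lc_cod C a)) (lc_ostar C (lc_dom C a))" using c13 by blast
  thus "lc_dom C (lc_mstar C a) = lc_ostar C (lc_cod C a)" "lc_cod C (lc_mstar C a) = lc_ostar C (lc_dom C a)"
    unfolding hom_def by auto
  show "lc_ostar C (lc_ostar C u) = u" "lc_mstar C (lc_mstar C a) = a" using c12 c13 by blast+
  have "lc_id C u \<in> hom C u u" using c1 by blast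
  thus "lc_dom C (lc_id C u) = u" "lc_cod C (lc_id C u) = u" unfolding hom_def by auto
  show "lc_dom C b = lc_cod C a \<Longrightarrow> lc_dom C (lc_comp C b a) = lc_dom C a"
    "lc_dom C b = lc_cod C a \<Longrightarrow> lc_cod C (lc_comp C b a) = lc_cod C b"
  proof -
    assume h: "lc_dom C b = lc_cod C a"
    have "lc_comp C b a \<in> hom C (lc_dom C a) (lc_cod C b)" using c2 h by blast
    thus "lc_dom C (lc_comp C b a) = lc_dom C a" "lc_cod C (lc_comp C b a) = lc_cod C b"
      unfolding hom_def by auto
  qed
  show "x \<in> hom C u v \<Longrightarrow> y \<in> hom C u v \<Longrightarrow> p \<in> center \<Longrightarrow> q \<in> center \<Longrightarrow>
       lc_add C (lc_scal C x p) (lc_scal C y q) \<in> hom C u v"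
  proof -
    assume h: "x \<in> hom C u v" "y \<in> hom C u v" "p \<in> center" "q \<in> center"
    show ?thesis using s1 s2 h by blast
  qed
qed

lemma part_facts:
  assumes "obj_partition C S0" "lin_cat_inv C bar"
  shows "u \<in> S0 \<Longrightarrow> lc_ostar C u \<notin> S0" "u \<notin> S0 \<Longrightarrow> lc_ostar C u \<in> S0"
proof -
  note oo = cat_facts(3)[OF assms(2)]
  show "u \<in> S0 \<Longrightarrow> lc_ostar C u \<notin> S0" using assms(1) unfolding obj_partition_def by blast
  assume "u \<notin> S0"
  then obtain w where "w \<in> S0" "u = lc_ostar C w" using assms(1) unfolding obj_partition_def by blast
  thus "lc_ostar C u \<in> S0" using oo by simp
qed

lemma rep_iso_D:
  assumes "rep_iso C A B F"
  shows "isom (fst B u) (fst A u) (F u)" "F (lc_cod C a) * snd A a = snd B a * F (lc_dom C a)"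
  using assms unfolding rep_iso_def rep_hom_def isom_def by blast+

lemma sa_facts:
  assumes "selfadjoint C bar A"
  shows "is_rep C A" "fst A (lc_ostar C u) = fst A u" "snd A a = adjm bar (snd A (lc_mstar C a))"
    "snd A a \<in> carrier_mat (fst A (lc_cod C a)) (fst A (lc_dom C a))"
proof -
  have e: "A = dual_rep C bar A" and r: "is_rep C A" using assms unfolding selfadjoint_def by auto
  have "fst A = fst (dual_rep C bar A)" using e by simp
  hence "fst A = (\<lambda>u. fst A (lc_ostar C u))" unfolding dual_rep_def by simp
  thus "fst A (lc_ostar C u) = fst A u" by metis
  have "snd A = snd (dual_rep C bar A)" using e by simp
  hence "snd A = (\<lambda>a. adjm bar (snd A (lc_mstar C a)))" unfolding dual_rep_def by simp
  thus "snd A a = adjm bar (snd A (lc_mstar C a))" by metis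
  show "is_rep C A" by (fact r)
  show "snd A a \<in> carrier_mat (fst A (lc_cod C a)) (fst A (lc_dom C a))" using r unfolding is_rep_def by blast
qed

lemma is_rep_D:
  assumes "is_rep C A"
  shows "finite {u. fst A u \<noteq> 0}" "snd A (lc_id C u) = 1\<^sub>m (fst A u)"
    "lc_dom C b = lc_cod C a \<Longrightarrow> snd A (lc_comp C b a) = snd A b * snd A a"
    "x \<in> hom C u v \<Longrightarrow> y \<in> hom C u v \<Longrightarrow> p \<in> center \<Longrightarrow> q \<in> center \<Longrightarrow>
       snd A (lc_add C (lc_scal C x p) (lc_scal C y q)) = mat_rscal (snd A x) p + mat_rscal (snd A y) q"
proof -
  note L = assms[unfolded is_rep_def]
  show "finite {u. fst A u \<noteq> 0}" using L by (elim conjE) assumption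
  have c3: "\<forall>u. snd A (lc_id C u) = 1\<^sub>m (fst A u)" using L by (elim conjE) assumption
  have c4: "\<forall>a b. lc_dom C b = lc_cod C a \<longrightarrow> snd A (lc_comp C b a) = snd A b * snd A a" using L by (elim conjE) assumption
  have c5: "\<forall>u v. \<forall>a\<in>hom C u v. \<forall>b\<in>hom C u v. \<forall>p\<in>center. \<forall>q\<in>center.
       snd A (lc_add C (lc_scal C a p) (lc_scal C b q)) =
         mat_rscal (snd A a) p + mat_rscal (snd A b) q" using L by (elim conjE) assumption
  show "snd A (lc_id C u) = 1\<^sub>m (fst A u)" using c3 by blast
  show "lc_dom C b = lc_cod C a \<Longrightarrow> snd A (lc_comp C b a) = snd A b * snd A a" using c4 by blast
  show "x \<in> hom C u v \<Longrightarrow> y \<in> hom C u v \<Longrightarrow> p \<in> center \<Longrightarrow> q \<in> center \<Longrightarrow>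
       snd A (lc_add C (lc_scal C x p) (lc_scal C y q)) = mat_rscal (snd A x) p + mat_rscal (snd A y) q"
    using c5 by blast
qed

lemma rep_facts:
  fixes C :: "('o, 'm, 'k::division_ring) lincat"
  assumes sb: "skew_involution bar" and lc: "lin_cat_inv C bar" and pt: "obj_partition C S0"
    and sa: "selfadjoint C bar A" and fi: "rep_iso C A A f" and fd: "dual_map C bar f = f"
  shows "isom (fst A u) (fst A u) (f u)"
    "isom (fst A u) (fst A u) (ftilde S0 A f u)"
    "isom (fst A u) (fst A u) (adjm bar (ftilde S0 A f (lc_ostar C u)))"
    "ftilde S0 A f u * adjm bar (ftilde S0 A f (lc_ostar C u)) = f u"
    "adjm bar (adjm bar (ftilde S0 A f (lc_ostar C (lc_ostar C u)))) = ftilde S0 A f u"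
    "snd (twist C S0 A f) a * adjm bar (ftilde S0 A f (lc_ostar C (lc_dom C a)))
       = adjm bar (ftilde S0 A f (lc_ostar C (lc_cod C a))) * snd A a"
proof -
  note cf = cat_facts[OF lc] and pf = part_facts[OF pt lc] and sf = sa_facts[OF sa]
  have fu: "\<And>u. isom (fst A u) (fst A u) (f u)" using rep_iso_D(1)[OF fi] .
  show "isom (fst A u) (fst A u) (f u)" by (fact fu)
  have Fi: "\<And>u. isom (fst A u) (fst A u) (ftilde S0 A f u)"
    unfolding ftilde_def using fu isom_one by auto
  show "isom (fst A u) (fst A u) (ftilde S0 A f u)" by (fact Fi)
  have Gi: "\<And>u. isom (fst A u) (fst A u) (adjm bar (ftilde S0 A f (lc_ostar C u)))"
    using adjm_isom(1)[OF sb Fi[of "lc_ostar C _"]] sf(2) by metis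
  show "isom (fst A u) (fst A u) (adjm bar (ftilde S0 A f (lc_ostar C u)))" by (fact Gi)
  have FG: "\<And>u. ftilde S0 A f u * adjm bar (ftilde S0 A f (lc_ostar C u)) = f u"
  proof -
    fix u
    show "ftilde S0 A f u * adjm bar (ftilde S0 A f (lc_ostar C u)) = f u"
    proof (cases "u \<in> S0")
      case True
      hence "ftilde S0 A f (lc_ostar C u) = 1\<^sub>m (fst A u)" using pf(1) sf(2) unfolding ftilde_def by simp
      thus ?thesis using True fu[of u] adjm_one[OF sb] unfolding ftilde_def isom_def by auto
    next
      case False
      hence "adjm bar (ftilde S0 A f (lc_ostar C u)) = f u" using pf(2) fd unfolding ftilde_def dual_map_def
        by (metis)
      thus ?thesis using False fu[of u] unfolding ftilde_def isom_def by auto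
    qed
  qed
  show "ftilde S0 A f u * adjm bar (ftilde S0 A f (lc_ostar C u)) = f u" by (fact FG)
  show "adjm bar (adjm bar (ftilde S0 A f (lc_ostar C (lc_ostar C u)))) = ftilde S0 A f u"
    using cf(3) adjm_adjm[OF sb] by simp
  let ?u = "lc_dom C a" and ?v = "lc_cod C a"
  have "(ftilde S0 A f ?v * adjm bar (ftilde S0 A f (lc_ostar C ?v))) * snd A a
      = snd A a * (ftilde S0 A f ?u * adjm bar (ftilde S0 A f (lc_ostar C ?u)))"
    using FG rep_iso_D(2)[OF fi] by simp
  from key1[OF Fi Gi Fi Gi sf(4) this]
  show "snd (twist C S0 A f) a * adjm bar (ftilde S0 A f (lc_ostar C (lc_dom C a)))
       = adjm bar (ftilde S0 A f (lc_ostar C (lc_cod C a))) * snd A a"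
    unfolding twist_def by simp
qed

lemma twist_sa:
  fixes C :: "('o, 'm, 'k::division_ring) lincat"
  assumes sb: "skew_involution bar" and lc: "lin_cat_inv C bar" and pt: "obj_partition C S0"
    and sa: "selfadjoint C bar A" and fi: "rep_iso C A A f" and fd: "dual_map C bar f = f"
  shows "selfadjoint C bar (twist C S0 A f)"
proof -
  note cf = cat_facts[OF lc] and sf = sa_facts[OF sa] and rf = rep_facts[OF assms]
  define F where "F = ftilde S0 A f"
  define T where "T = snd (twist C S0 A f)"
  have Td: "\<And>a. T a = minv (F (lc_cod C a)) * snd A a * F (lc_dom C a)"
    unfolding T_def F_def twist_def by simp
  have fT: "fst (twist C S0 A f) = fst A" unfolding twist_def by simp
  note Fi = rf(2)[folded F_def]
  note Fm = isom_minv[OF Fi]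
  have isr: "is_rep C A" by (fact sf(1))
  have Tc: "\<And>a. T a \<in> carrier_mat (fst A (lc_cod C a)) (fst A (lc_dom C a))"
    unfolding Td using Fm sf(4) by (meson mult_carrier_mat)
  have rep: "is_rep C (twist C S0 A f)"
    unfolding is_rep_def fT T_def[symmetric]
  proof (intro conjI allI impI ballI)
    show "finite {u. fst A u \<noteq> 0}" using is_rep_D(1)[OF isr] .
    show "\<And>a. T a \<in> carrier_mat (fst A (lc_cod C a)) (fst A (lc_dom C a))" by (fact Tc)
    fix u
    have "snd A (lc_id C u) = 1\<^sub>m (fst A u)" using is_rep_D(2)[OF isr] .
    thus "T (lc_id C u) = 1\<^sub>m (fst A u)" unfolding Td cf(5,6) using Fm[of u] by (simp add: cd)
  next
    fix a b assume h: "lc_dom C b = lc_cod C a"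
    have "snd A (lc_comp C b a) = snd A b * snd A a" using is_rep_D(3)[OF isr h] .
    thus "T (lc_comp C b a) = T b * T a"
      unfolding Td cf(7,8)[OF h] using Fm cd[OF sf(4)[of a]] cd[OF sf(4)[of b]] h
        cd[OF Fm(1)[of "lc_cod C b"]] cd[OF Fm(1)[of "lc_cod C a"]] cd[OF Fm(1)[of "lc_dom C a"]]
        cd[OF Fm(6)[of "lc_cod C b"]] cd[OF Fm(6)[of "lc_cod C a"]] cd[OF Fm(6)[of "lc_dom C a"]]
      by (simp add: ms)
  next
    fix u v x y and p q :: 'k assume h: "x \<in> hom C u v" "y \<in> hom C u v" "p \<in> center" "q \<in> center"
    have hx: "lc_dom C x = u" "lc_cod C x = v" "lc_dom C y = u" "lc_cod C y = v" using h(1,2) unfolding hom_def by simp_all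
    have hz: "lc_dom C (lc_add C (lc_scal C x p) (lc_scal C y q)) = u"
      "lc_cod C (lc_add C (lc_scal C x p) (lc_scal C y q)) = v"
      using cf(9)[OF h] unfolding hom_def by simp_all
    have e: "snd A (lc_add C (lc_scal C x p) (lc_scal C y q)) = mat_rscal (snd A x) p + mat_rscal (snd A y) q"
      using is_rep_D(4)[OF isr h] .
    have cx: "snd A x \<in> carrier_mat (fst A v) (fst A u)" "snd A y \<in> carrier_mat (fst A v) (fst A u)"
      using sf(4)[of x] sf(4)[of y] unfolding hx by simp_all
    have cxs: "mat_rscal (snd A x) p \<in> carrier_mat (fst A v) (fst A u)" "mat_rscal (snd A y) q \<in> carrier_mat (fst A v) (fst A u)"
      using cx unfolding carrier_mat_def by simp_all
    have "T (lc_add C (lc_scal C x p) (lc_scal C y q))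
       = minv (F v) * (mat_rscal (snd A x) p + mat_rscal (snd A y) q) * F u"
      unfolding Td hz e ..
    also have "\<dots> = (minv (F v) * mat_rscal (snd A x) p + minv (F v) * mat_rscal (snd A y) q) * F u"
      using Fm cxs by (subst mult_add_distrib_mat) auto
    also have "\<dots> = minv (F v) * mat_rscal (snd A x) p * F u + minv (F v) * mat_rscal (snd A y) q * F u"
      by (rule add_mult_distrib_mat[of _ "fst A v" "fst A u" _ _ "fst A u"]) (use Fm(1)[of v] Fm(6)[of u] cxs in \<open>auto intro: mult_carrier_mat\<close>)
    also have "\<dots> = mat_rscal (T x) p + mat_rscal (T y) q"
      unfolding Td using cd[OF Fm(1)[of v]] cd[OF Fm(6)[of u]] cd[OF cx(1)] cd[OF cx(2)] h(3,4) hx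
        by (simp add: mult_rscal rscal_mult)
    finally show "T (lc_add C (lc_scal C x p) (lc_scal C y q)) = mat_rscal (T x) p + mat_rscal (T y) q" .
  qed
  have sadj: "T a = adjm bar (T (lc_mstar C a))" for a
  proof -
    let ?u = "lc_dom C a" and ?v = "lc_cod C a" and ?b = "lc_mstar C a"
    have e1: "T ?b * adjm bar (F ?v) = adjm bar (F ?u) * snd A ?b"
      using rf(6)[of ?b] unfolding cf(1,2) cf(3) T_def F_def by simp
    have Tb: "T ?b \<in> carrier_mat (fst A ?u) (fst A ?v)" using Tc[of ?b] unfolding cf(1,2) sf(2) .
    have Rb: "snd A ?b \<in> carrier_mat (fst A ?u) (fst A ?v)" using sf(4)[of ?b] unfolding cf(1,2) sf(2) .
    have Gc: "\<And>w. adjm bar (F w) \<in> carrier_mat (fst A w) (fst A w)"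
      using Fm(6) by (rule adjm_carrier)
    have "adjm bar (T ?b * adjm bar (F ?v)) = adjm bar (adjm bar (F ?u) * snd A ?b)"
      using e1 by simp
    moreover have "adjm bar (T ?b * adjm bar (F ?v)) = F ?v * adjm bar (T ?b)"
      using adjm_mult[OF sb, of "T ?b" "adjm bar (F ?v)"] cd[OF Tb] cd[OF Fm(6)[of ?v]] adjm_adjm[OF sb] by simp
    moreover have "adjm bar (adjm bar (F ?u) * snd A ?b) = snd A a * F ?u"
      using adjm_mult[OF sb, of "adjm bar (F ?u)" "snd A ?b"] cd[OF Rb] cd[OF Fm(6)[of ?u]] adjm_adjm[OF sb] sf(3)[of a] by simp
    ultimately have "F ?v * adjm bar (T ?b) = snd A a * F ?u" by simp
    hence "minv (F ?v) * (F ?v * adjm bar (T ?b)) = minv (F ?v) * (snd A a * F ?u)" by simp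
    also have "\<dots> = T a" unfolding Td using cd[OF Fm(1)[of ?v]] cd[OF sf(4)[of a]] cd[OF Fm(6)[of ?u]] by (simp add: mas)
    finally have 1: "minv (F ?v) * (F ?v * adjm bar (T ?b)) = T a" .
    have "adjm bar (T ?b) \<in> carrier_mat (fst A ?v) (fst A ?u)" using Tb by auto
    hence "minv (F ?v) * (F ?v * adjm bar (T ?b)) = adjm bar (T ?b)"
      using Fm(2)[of ?v] cd[OF Fm(1)[of ?v]] cd[OF Fm(6)[of ?v]] by (intro mcan) (auto dest: cd)
    with 1 show ?thesis by simp
  qed
  have "twist C S0 A f = dual_rep C bar (twist C S0 A f)"
  proof (rule prod_eqI)
    show "fst (twist C S0 A f) = fst (dual_rep C bar (twist C S0 A f))"
      unfolding dual_rep_def fT using sf(2) by auto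
    show "snd (twist C S0 A f) = snd (dual_rep C bar (twist C S0 A f))"
      unfolding dual_rep_def T_def[symmetric] snd_conv by (rule ext, rule sadj)
  qed
  thus ?thesis using rep unfolding selfadjoint_def by simp
qed

lemma nat_assoc:
  fixes P X Y Q Z :: "'a::semiring_0 mat"
  assumes "P * X = Y * Q" "dim_col P = dim_row X" "dim_col X = dim_row Z" "dim_col Y = dim_row Q" "dim_col Q = dim_row Z"
  shows "P * (X * Z) = Y * (Q * Z)"
  using assms mas by metis

lemma adjm3:
  fixes X Y Z :: "'k::division_ring mat"
  assumes sb: "skew_involution bar" and "dim_col X = dim_row Y" "dim_col Y = dim_row Z"
  shows "adjm bar (X * Y * Z) = adjm bar Z * adjm bar Y * adjm bar X"
  using assms by (simp add: adjm_mult mas)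

lemma alg1:
  fixes FA GA FB GB H h f :: "'k::ring_1 mat"
  assumes FA: "isom n n FA" and GA: "isom n n GA" and FB: "isom m m FB" and GB: "isom m m GB"
    and H: "isom m n H" and hc: "h \<in> carrier_mat n m" and ef: "FA * GA = f" and eg: "FB * GB = H * f * h"
  shows "GA * h * minv GB = minv FA * minv H * FB"
proof -
  note a = isom_minv[OF FA] isom_minv[OF GA] isom_minv[OF FB] isom_minv[OF GB] isom_minv[OF H]
  note d = cd[OF a(1)] cd[OF a(6)] cd[OF a(7)] cd[OF a(12)] cd[OF a(13)] cd[OF a(18)]
     cd[OF a(19)] cd[OF a(24)] cd[OF a(25)] cd[OF a(30)] cd[OF hc]
  have "minv FA * minv H * FB = minv FA * (minv H * (FB * (GB * minv GB)))" using a d by (simp add: mas)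
  also have "\<dots> = minv FA * (minv H * ((FB * GB) * minv GB))" using a d by (simp add: mas)
  also have "\<dots> = minv FA * (minv H * (H * (FA * (GA * (h * minv GB)))))" unfolding eg ef[symmetric] using a d by (simp add: mas)
  also have "\<dots> = GA * h * minv GB" using a d by (simp add: mas mcan)
  finally show ?thesis by simp
qed

lemma alg2:
  fixes FA GA FB GB P :: "'k::ring_1 mat"
  assumes FA: "isom n n FA" and GA: "isom n n GA" and FB: "isom m m FB" and GB: "isom m m GB"
    and P: "isom m n P"
  shows "FB * GB = (FB * P * minv FA) * (FA * GA) * (minv GA * minv P * GB)"
proof -
  note a = isom_minv[OF FA] isom_minv[OF GA] isom_minv[OF FB] isom_minv[OF GB] isom_minv[OF P]
  note d = cd[OF a(1)] cd[OF a(6)] cd[OF a(7)] cd[OF a(12)] cd[OF a(13)] cd[OF a(18)]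
     cd[OF a(19)] cd[OF a(24)] cd[OF a(25)] cd[OF a(30)]
  show ?thesis using a d by (simp add: mas mcan)
qed

lemma rep_iso_I:
  assumes "\<And>u. isom (fst B u) (fst A u) (F u)" "\<And>a. F (lc_cod C a) * snd A a = snd B a * F (lc_dom C a)"
  shows "rep_iso C A B F"
  using assms unfolding rep_iso_def rep_hom_def isom_def by blast

lemma back_dir:
  fixes C :: "('o, 'm, 'k::division_ring) lincat"
  assumes sb: "skew_involution bar" and lc: "lin_cat_inv C bar" and pt: "obj_partition C S0"
    and saA: "selfadjoint C bar A" and saB: "selfadjoint C bar B"
    and fi: "rep_iso C A A f" and fd: "dual_map C bar f = f"
    and gi: "rep_iso C B B g" and gd: "dual_map C bar g = g"
    and hi: "rep_iso C B A h" and hg: "\<And>u. g u = dual_map C bar h u * f u * h u"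
  shows "congruent C bar (twist C S0 A f) (twist C S0 B g)"
proof -
  note cf = cat_facts[OF lc] and sA = sa_facts[OF saA] and sB = sa_facts[OF saB]
  note rA = rep_facts[OF sb lc pt saA fi fd] and rB = rep_facts[OF sb lc pt saB gi gd]
  define FA where "FA = ftilde S0 A f"
  define FB where "FB = ftilde S0 B g"
  define GA where "GA u = adjm bar (FA (lc_ostar C u))" for u
  define GB where "GB u = adjm bar (FB (lc_ostar C u))" for u
  define H where "H u = adjm bar (h (lc_ostar C u))" for u
  define TA where "TA = snd (twist C S0 A f)"
  define TB where "TB = snd (twist C S0 B g)"
  have TAd: "\<And>a. TA a = minv (FA (lc_cod C a)) * snd A a * FA (lc_dom C a)"
    unfolding TA_def FA_def twist_def by simp
  have TBd: "\<And>a. TB a = minv (FB (lc_cod C a)) * snd B a * FB (lc_dom C a)"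
    unfolding TB_def FB_def twist_def by simp
  have FAi: "\<And>u. isom (fst A u) (fst A u) (FA u)" using rA(2) unfolding FA_def .
  have FBi: "\<And>u. isom (fst B u) (fst B u) (FB u)" using rB(2) unfolding FB_def .
  have GAi: "\<And>u. isom (fst A u) (fst A u) (GA u)" using rA(3) unfolding GA_def FA_def .
  have GBi: "\<And>u. isom (fst B u) (fst B u) (GB u)" using rB(3) unfolding GB_def FB_def .
  have hI: "\<And>u. isom (fst A u) (fst B u) (h u)" using rep_iso_D(1)[OF hi] .
  have HI: "\<And>u. isom (fst B u) (fst A u) (H u)"
    unfolding H_def using adjm_isom(1)[OF sb hI] sA(2) sB(2) by metis
  have FGA: "\<And>u. FA u * GA u = f u" using rA(4) unfolding FA_def GA_def .
  have FGB: "\<And>u. FB u * GB u = g u" using rB(4) unfolding FB_def GB_def .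
  have Hn: "H (lc_cod C a) * snd A a = snd B a * H (lc_dom C a)" for a
  proof -
    let ?b = "lc_mstar C a" and ?u = "lc_dom C a" and ?v = "lc_cod C a"
    have e: "h (lc_ostar C ?u) * snd B ?b = snd A ?b * h (lc_ostar C ?v)"
      using rep_iso_D(2)[OF hi, of ?b] unfolding cf(1,2) .
    have c1: "h (lc_ostar C ?u) \<in> carrier_mat (fst A ?u) (fst B ?u)"
      using isom_minv(6)[OF hI[of "lc_ostar C ?u"]] unfolding sA(2) sB(2) .
    have c2: "h (lc_ostar C ?v) \<in> carrier_mat (fst A ?v) (fst B ?v)"
      using isom_minv(6)[OF hI[of "lc_ostar C ?v"]] unfolding sA(2) sB(2) .
    have c3: "snd B ?b \<in> carrier_mat (fst B ?u) (fst B ?v)" using sB(4)[of ?b] unfolding cf(1,2) sB(2) .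
    have c4: "snd A ?b \<in> carrier_mat (fst A ?u) (fst A ?v)" using sA(4)[of ?b] unfolding cf(1,2) sA(2) .
    have "adjm bar (h (lc_ostar C ?u) * snd B ?b) = adjm bar (snd A ?b * h (lc_ostar C ?v))" using e by simp
    moreover have "adjm bar (h (lc_ostar C ?u) * snd B ?b) = snd B a * H ?u"
      unfolding H_def using adjm_mult[OF sb, of "h (lc_ostar C ?u)" "snd B ?b"] cd[OF c1] cd[OF c3] sB(3)[of a] by simp
    moreover have "adjm bar (snd A ?b * h (lc_ostar C ?v)) = H ?v * snd A a"
      unfolding H_def using adjm_mult[OF sb, of "snd A ?b" "h (lc_ostar C ?v)"] cd[OF c2] cd[OF c4] sA(3)[of a] by simp
    ultimately show ?thesis by simp
  qed
  define P where "P u = minv (FB u) * H u * FA u" for u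
  have PI: "\<And>u. isom (fst B u) (fst A u) (P u)"
    unfolding P_def by (meson isom_mult(1) isom_minv(4) FBi HI FAi)
  have Pn: "P (lc_cod C a) * TA a = TB a * P (lc_dom C a)" for a
  proof -
    let ?u = "lc_dom C a" and ?v = "lc_cod C a"
    note m1 = isom_minv[OF FAi[of ?u]] and m2 = isom_minv[OF FAi[of ?v]]
      and m3 = isom_minv[OF FBi[of ?u]] and m4 = isom_minv[OF FBi[of ?v]]
      and m5 = isom_minv[OF HI[of ?u]] and m6 = isom_minv[OF HI[of ?v]]
    note d = cd[OF m1(1)] cd[OF m1(6)] cd[OF m2(1)] cd[OF m2(6)] cd[OF m3(1)] cd[OF m3(6)]
      cd[OF m4(1)] cd[OF m4(6)] cd[OF m5(6)] cd[OF m6(6)] cd[OF sA(4)[of a]] cd[OF sB(4)[of a]]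
    have n: "H ?v * (snd A a * FA ?u) = snd B a * (H ?u * FA ?u)"
      by (rule nat_assoc[OF Hn]) (use d in auto)
    show ?thesis unfolding P_def TAd TBd using m1 m2 m3 m4 d n by (simp add: mas mcan)
  qed
  have Pd: "dual_map C bar P u = minv (P u)" for u
  proof -
    let ?w = "lc_ostar C u"
    have "dual_map C bar P u = adjm bar (minv (FB ?w) * H ?w * FA ?w)" unfolding dual_map_def P_def ..
    also have "\<dots> = adjm bar (FA ?w) * adjm bar (H ?w) * adjm bar (minv (FB ?w))"
      using isom_minv(1,6)[OF FBi[of ?w]] isom_minv(6)[OF HI[of ?w]] isom_minv(6)[OF FAi[of ?w]]
      by (intro adjm3[OF sb]) (auto dest: cd)
    also have "\<dots> = GA u * h u * minv (GB u)"
      unfolding GA_def GB_def H_def cf(3) adjm_adjm[OF sb] adjm_isom(2)[OF sb FBi, symmetric] ..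
    also have "\<dots> = minv (FA u) * minv (H u) * FB u"
    proof (rule alg1[OF FAi GAi FBi GBi HI])
      show "h u \<in> carrier_mat (fst A u) (fst B u)" using isom_minv(6)[OF hI] .
      show "FA u * GA u = f u" by (fact FGA)
      show "FB u * GB u = H u * f u * h u" using FGB hg unfolding H_def dual_map_def by simp
    qed
    also have "\<dots> = minv (P u)" unfolding P_def
      using isom_mult[OF isom_mult(1)[OF isom_minv(4)[OF FBi] HI] FAi] isom_mult[OF isom_minv(4)[OF FBi] HI]
        isom_minv(5)[OF FBi] cd[OF isom_minv(1)[OF FAi[of u]]] cd[OF isom_minv(1)[OF HI[of u]]]
        cd[OF isom_minv(6)[OF FBi[of u]]] by (simp add: mas)
    finally show ?thesis .
  qed
  have "rep_iso C (twist C S0 A f) (twist C S0 B g) P"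
    by (rule rep_iso_I) (use PI Pn in \<open>auto simp: twist_def TA_def TB_def\<close>)
  thus ?thesis unfolding congruent_def using twist_sa[OF sb lc pt saA fi fd] twist_sa[OF sb lc pt saB gi gd] Pd by blast
qed

lemma fwd_dir:
  fixes C :: "('o, 'm, 'k::division_ring) lincat"
  assumes sb: "skew_involution bar" and lc: "lin_cat_inv C bar" and pt: "obj_partition C S0"
    and saA: "selfadjoint C bar A" and saB: "selfadjoint C bar B"
    and fi: "rep_iso C A A f" and fd: "dual_map C bar f = f"
    and gi: "rep_iso C B B g" and gd: "dual_map C bar g = g"
    and co: "congruent C bar (twist C S0 A f) (twist C S0 B g)"
  shows "\<exists>h. rep_iso C B A h \<and> (\<forall>u. g u = dual_map C bar h u * f u * h u)"
proof -
  note cf = cat_facts[OF lc] and sA = sa_facts[OF saA] and sB = sa_facts[OF saB]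
  note rA = rep_facts[OF sb lc pt saA fi fd] and rB = rep_facts[OF sb lc pt saB gi gd]
  obtain P where Pi: "rep_iso C (twist C S0 A f) (twist C S0 B g) P"
    and Pd: "\<And>u. dual_map C bar P u = minv (P u)"
    using co unfolding congruent_def by blast
  define FA where "FA = ftilde S0 A f"
  define FB where "FB = ftilde S0 B g"
  define GA where "GA u = adjm bar (FA (lc_ostar C u))" for u
  define GB where "GB u = adjm bar (FB (lc_ostar C u))" for u
  define TA where "TA = snd (twist C S0 A f)"
  define TB where "TB = snd (twist C S0 B g)"
  have FAi: "\<And>u. isom (fst A u) (fst A u) (FA u)" using rA(2) unfolding FA_def .
  have FBi: "\<And>u. isom (fst B u) (fst B u) (FB u)" using rB(2) unfolding FB_def .
  have GAi: "\<And>u. isom (fst A u) (fst A u) (GA u)" using rA(3) unfolding GA_def FA_def .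
  have GBi: "\<And>u. isom (fst B u) (fst B u) (GB u)" using rB(3) unfolding GB_def FB_def .
  have FGA: "\<And>u. FA u * GA u = f u" using rA(4) unfolding FA_def GA_def .
  have FGB: "\<And>u. FB u * GB u = g u" using rB(4) unfolding FB_def GB_def .
  have nA: "\<And>a. TA a * GA (lc_dom C a) = GA (lc_cod C a) * snd A a"
    using rA(6) unfolding TA_def GA_def FA_def .
  have nB: "\<And>a. TB a * GB (lc_dom C a) = GB (lc_cod C a) * snd B a"
    using rB(6) unfolding TB_def GB_def FB_def .
  have PI: "\<And>u. isom (fst B u) (fst A u) (P u)" using rep_iso_D(1)[OF Pi] unfolding twist_def by simp
  have Pn: "\<And>a. P (lc_cod C a) * TA a = TB a * P (lc_dom C a)" using rep_iso_D(2)[OF Pi] unfolding TA_def TB_def .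
  have TAc: "\<And>a. TA a \<in> carrier_mat (fst A (lc_cod C a)) (fst A (lc_dom C a))"
    using sa_facts(4)[OF twist_sa[OF sb lc pt saA fi fd]] unfolding TA_def by (simp add: twist_def)
  have TBc: "\<And>a. TB a \<in> carrier_mat (fst B (lc_cod C a)) (fst B (lc_dom C a))"
    using sa_facts(4)[OF twist_sa[OF sb lc pt saB gi gd]] unfolding TB_def by (simp add: twist_def)
  define h where "h u = minv (GA u) * minv (P u) * GB u" for u
  have hI: "\<And>u. isom (fst A u) (fst B u) (h u)"
    unfolding h_def by (meson isom_mult(1) isom_minv(4) GAi PI GBi)
  have hn: "h (lc_cod C a) * snd B a = snd A a * h (lc_dom C a)" for a
  proof -
    let ?u = "lc_dom C a" and ?v = "lc_cod C a"
    have s1: "minv (P ?v) * TB a = TA a * minv (P ?u)"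
      by (rule swap_inv[OF PI PI TAc TBc Pn])
    have s2: "minv (GA ?v) * TA a = snd A a * minv (GA ?u)"
      by (rule swap_inv[OF GAi GAi sA(4) TAc nA[symmetric]])
    note m1 = isom_minv[OF GAi[of ?u]] and m2 = isom_minv[OF GAi[of ?v]]
      and m3 = isom_minv[OF GBi[of ?u]] and m4 = isom_minv[OF GBi[of ?v]]
      and m5 = isom_minv[OF PI[of ?u]] and m6 = isom_minv[OF PI[of ?v]]
    note d = cd[OF m1(1)] cd[OF m1(6)] cd[OF m2(1)] cd[OF m2(6)] cd[OF m3(1)] cd[OF m3(6)]
      cd[OF m4(1)] cd[OF m4(6)] cd[OF m5(1)] cd[OF m6(1)] cd[OF sA(4)[of a]] cd[OF sB(4)[of a]]
      cd[OF TAc[of a]] cd[OF TBc[of a]]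
    have "h ?v * snd B a = minv (GA ?v) * (minv (P ?v) * (GB ?v * snd B a))"
      unfolding h_def using d by (simp add: mas)
    also have "\<dots> = minv (GA ?v) * (minv (P ?v) * (TB a * GB ?u))" unfolding nB[symmetric] ..
    also have "\<dots> = minv (GA ?v) * (TA a * (minv (P ?u) * GB ?u))"
      using nat_assoc[OF s1] d by simp
    also have "\<dots> = snd A a * (minv (GA ?u) * (minv (P ?u) * GB ?u))"
      using nat_assoc[OF s2] d by simp
    also have "\<dots> = snd A a * h ?u" unfolding h_def using d by (simp add: mas)
    finally show ?thesis .
  qed
  have hd: "g u = dual_map C bar h u * f u * h u" for u
  proof -
    let ?w = "lc_ostar C u"
    have "dual_map C bar h u = adjm bar (minv (GA ?w) * minv (P ?w) * GB ?w)" unfolding dual_map_def h_def ..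
    also have "\<dots> = adjm bar (GB ?w) * adjm bar (minv (P ?w)) * adjm bar (minv (GA ?w))"
      using isom_minv(1)[OF GAi[of ?w]] isom_minv(1)[OF PI[of ?w]] isom_minv(6)[OF GBi[of ?w]]
      by (intro adjm3[OF sb]) (auto dest: cd)
    also have "\<dots> = FB u * P u * minv (FA u)"
    proof -
      have 1: "adjm bar (GB ?w) = FB u" unfolding GB_def cf(3) adjm_adjm[OF sb] ..
      have 2: "adjm bar (minv (P ?w)) = P u"
        using adjm_isom(2)[OF sb PI[of ?w]] Pd[of u] isom_minv(5)[OF PI[of u]] unfolding dual_map_def by simp
      have 3: "adjm bar (minv (GA ?w)) = minv (FA u)"
        using adjm_isom(2)[OF sb GAi[of ?w]] unfolding GA_def cf(3) adjm_adjm[OF sb] by simp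
      show ?thesis unfolding 1 2 3 ..
    qed
    finally have e: "dual_map C bar h u = FB u * P u * minv (FA u)" .
    show ?thesis unfolding e h_def FGA[symmetric] FGB[symmetric]
      by (rule alg2[OF FAi GAi FBi GBi PI])
  qed
  have "rep_iso C B A h" by (rule rep_iso_I[OF hI hn])
  thus ?thesis using hd by blast
qed

theorem lemma3:
  fixes C :: "('o, 'm, 'k::division_ring) lincat"
    and bar :: "'k \<Rightarrow> 'k"
    and S0 :: "'o set"
    and A B :: "('o, 'm, 'k) rep"
    and f g :: "'o \<Rightarrow> 'k mat"
  assumes "skew_involution bar"
    and "lin_cat_inv C bar"
    and "obj_partition C S0"
    and "selfadjoint C bar A"
    and "selfadjoint C bar B"
    and "rep_iso C A A f" and "dual_map C bar f = f"
    and "rep_iso C B B g" and "dual_map C bar g = g"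
  shows "congruent C bar (twist C S0 A f) (twist C S0 B g) \<longleftrightarrow>
    (\<exists>h. rep_iso C B A h \<and> (\<forall>u. g u = dual_map C bar h u * f u * h u))"
  using fwd_dir[OF assms] back_dir[OF assms] by blast

end
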